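(* Let $\gamma(n)>0$ and $a(n)\ge\frac12$ be sequences, $\rho_0=\sqrt{1+e^{W_0(2/e^2)+2}}$, and $$\sigma(n)\defeq\frac{a(n)+\gamma(n)}{W_0\!\left(\frac{1}{2\rho_0\gamma(n)}+\frac1{\rho_0}\right)}.$$ Then $\sigma(n)\in O\big(a(n)\log(1/\gamma(n))^{-1}\big)$ if $\gamma(n)\in o(1)$, and $\sigma(n)\in O(a(n)+\gamma(n))$ if $\gamma(n)\in\Omega(1)$.
   Context: $W_0$ is the principal branch of the Lambert W function. In the paper, $\sigma(n)=s(\varepsilon=n^{-a})/\log n$ is the normalised Taylor order, $\gamma(n)=\beta R_{\mathbf Q}R_{\mathbf K}/\log n$ the normalised entry size, and $a(n)$ the error exponent. Asymptotics are as $n\to\infty$. *)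

theory Defs
  imports Complex_Main "HOL-Library.Landau_Symbols"
begin

definition lambertW0 :: "real \<Rightarrow> real" where
  "lambertW0 x = (THE w. w \<ge> -1 \<and> w * exp w = x)"

definition rho0 :: real where
  "rho0 = sqrt (1 + exp (lambertW0 (2 / exp 1 ^ 2) + 2))"

end

theory Submission
  imports Defs
begin

lemma W0_props:
  fixes x :: real assumes x: "x > 0"
  shows "lambertW0 x > 0 \<and> lambertW0 x * exp (lambertW0 x) = x"
proof -
  have pos: "v > 0" if "v * exp v = x" for v :: real
  proof (rule ccontr)
    assume "\<not> v > 0"
    then have "v * exp v \<le> 0" by (simp add: mult_nonpos_nonneg)
    with that x show False by simp
  qed
  have mono: "v * exp v < w * exp w" if "0 < v" "v < w" for v w :: real
    using that by (intro mult_strict_mono) auto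
  have "\<exists>w. 0 \<le> w \<and> w \<le> x \<and> w * exp w = x"
  proof (rule IVT'[where f="\<lambda>w. w * exp w"])
    show "0 * exp 0 \<le> x" using x by simp
    have "x * 1 \<le> x * exp x" using x by (intro mult_left_mono) auto
    then show "x \<le> x * exp x" by simp
    show "0 \<le> x" using x by simp
    show "continuous_on {0..x} (\<lambda>w. w * exp w)" by (intro continuous_intros)
  qed
  then obtain w where w: "w * exp w = x" by blast
  have wp: "w > 0" using pos[OF w] .
  have "lambertW0 x = w"
    unfolding lambertW0_def
  proof (rule the_equality)
    show "w \<ge> -1 \<and> w * exp w = x" using w wp by simp
    fix v assume v: "v \<ge> -1 \<and> v * exp v = x"
    then have vp: "v > 0" using pos by blast
    show "v = w"
    proof (rule ccontr)
      assume "v \<noteq> w"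
      then have "v < w \<or> w < v" by auto
      then show False using mono[of v w] mono[of w v] vp wp v w by auto
    qed
  qed
  then show ?thesis using w wp by simp
qed

lemma W0_lb1:
  fixes x :: real assumes x: "x > 0"
  shows "lambertW0 x \<ge> min 1 (x / exp 1)"
proof -
  define w where "w = lambertW0 x"
  have w: "w > 0" "w * exp w = x" using W0_props[OF x] w_def by auto
  show ?thesis
  proof (cases "w \<le> 1")
    case True
    have "x \<le> w * exp 1" using w True by (metis exp_le_cancel_iff mult_left_mono less_imp_le)
    then have "x / exp 1 \<le> w" by (simp add: divide_le_eq)
    then show ?thesis unfolding w_def by simp
  next
    case False then show ?thesis unfolding w_def by simp
  qed
qed

lemma W0_lb2:
  fixes x :: real assumes x: "x > 0"
  shows "lambertW0 x \<ge> ln x / 2"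
proof (rule ccontr)
  define w where "w = lambertW0 x"
  have w: "w > 0" "w * exp w = x" using W0_props[OF x] w_def by auto
  assume "\<not> lambertW0 x \<ge> ln x / 2"
  then have lt: "w < ln x / 2" unfolding w_def by simp
  have s: "ln (sqrt x) = ln x / 2" using x by (simp add: ln_sqrt)
  have e: "exp w < sqrt x" using lt s x by (metis exp_less_cancel_iff exp_ln real_sqrt_gt_zero)
  have "ln (sqrt x) < sqrt x" using x by (intro ln_less_self) simp
  then have w2: "w < sqrt x" using lt s by simp
  have "w * exp w < sqrt x * sqrt x" using w e w2 by (intro mult_strict_mono) auto
  then show False using w x by simp
qed

lemma rho0_ge1: "rho0 \<ge> 1"
  unfolding rho0_def by simp

theorem lemmaI2:
  fixes \<gamma> a \<sigma> :: "nat \<Rightarrow> real"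
  assumes gpos: "\<And>n. \<gamma> n > 0"
    and ahalf: "\<And>n. a n \<ge> 1/2"
    and sigma_def: "\<And>n. \<sigma> n = (a n + \<gamma> n) /
                 lambertW0 (1 / (2 * rho0 * \<gamma> n) + 1 / rho0)"
  shows "(\<gamma> \<in> o(\<lambda>_. 1) \<longrightarrow> \<sigma> \<in> O(\<lambda>n. a n / ln (1 / \<gamma> n)))
       \<and> (\<gamma> \<in> \<Omega>(\<lambda>_. 1) \<longrightarrow> \<sigma> \<in> O(\<lambda>n. a n + \<gamma> n))"
proof (intro conjI impI)
  have r: "rho0 \<ge> 1" by (rule rho0_ge1)
  define x where "x n = 1 / (2 * rho0 * \<gamma> n) + 1 / rho0" for n
  have xpos: "x n > 0" for n unfolding x_def using r gpos[of n] by (intro add_pos_pos) auto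
  have sd: "\<sigma> n = (a n + \<gamma> n) / lambertW0 (x n)" for n using sigma_def x_def by simp
  have Wpos: "lambertW0 (x n) > 0" for n using W0_props[OF xpos] by simp
  have apos: "a n + \<gamma> n > 0" for n using ahalf[of n] gpos[of n] by linarith
  {
    define c where "c = min 1 ((1/rho0) / exp 1)"
    have cpos: "c > 0" unfolding c_def using r by simp
    have "lambertW0 (x n) \<ge> c" for n
    proof -
      have "x n \<ge> 1 / rho0" unfolding x_def using r gpos[of n] by simp
      then have "(1/rho0) / exp 1 \<le> x n / exp 1" by (intro divide_right_mono) auto
      then have "min 1 (x n / exp 1) \<ge> c" unfolding c_def by linarith
      then show ?thesis using W0_lb1[OF xpos[of n]] by linarith
    qed
    then have "norm (\<sigma> n) \<le> (1/c) * norm (a n + \<gamma> n)" for n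
      using apos[of n] Wpos[of n] cpos unfolding sd
      by (simp add: divide_simps abs_of_pos mult_left_mono)
    then have "eventually (\<lambda>n. norm (\<sigma> n) \<le> (1/c) * norm (a n + \<gamma> n)) sequentially"
      by (intro always_eventually) auto
    then show "\<sigma> \<in> O(\<lambda>n. a n + \<gamma> n)" by (rule bigoI)
  }
  assume sm: "\<gamma> \<in> o(\<lambda>_. 1)"
  define \<epsilon> where "\<epsilon> = 1 / (4 * rho0^2)"
  have epos: "\<epsilon> > 0" unfolding \<epsilon>_def using r by simp
  have ev: "eventually (\<lambda>n. norm (\<gamma> n) \<le> \<epsilon> * norm (1::real)) sequentially"
    using landau_o.smallD[OF sm epos] .
  have "eventually (\<lambda>n. norm (\<sigma> n) \<le> 12 * norm (a n / ln (1 / \<gamma> n))) sequentially"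
    using ev
  proof eventually_elim
    case (elim n)
    have g: "\<gamma> n \<le> \<epsilon>" using elim gpos[of n] by simp
    have "\<epsilon> \<le> 1/4" unfolding \<epsilon>_def using r
      by (simp add: divide_simps)
    then have g4: "\<gamma> n \<le> 1/4" using g by simp
    have inv: "1 / \<gamma> n \<ge> 4 * rho0^2" using g gpos[of n] r unfolding \<epsilon>_def
      by (simp add: divide_simps mult.commute)
    have L: "ln (1 / \<gamma> n) \<ge> 2 * ln (2 * rho0)"
    proof -
      have "ln ((2*rho0)^2) \<le> ln (1 / \<gamma> n)" using inv r gpos[of n]
        by (subst ln_le_cancel_iff) (auto simp: power_mult_distrib)
      moreover have "ln ((2*rho0)^2) = 2 * ln (2*rho0)"
        using ln_realpow[of "2*rho0" 2] r by simp
      ultimately show ?thesis by simp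
    qed
    have Lpos: "ln (1 / \<gamma> n) > 0" using g4 gpos[of n] by simp
    have lr: "ln (2 * rho0) \<ge> 0" using r by simp
    have "lambertW0 (x n) \<ge> ln (x n) / 2" by (rule W0_lb2[OF xpos])
    moreover have "ln (x n) \<ge> ln (1 / (2 * rho0 * \<gamma> n))"
      using xpos[of n] gpos[of n] r unfolding x_def by (subst ln_le_cancel_iff) auto
    moreover have "ln (1 / (2 * rho0 * \<gamma> n)) = ln (1 / \<gamma> n) - ln (2 * rho0)"
      using gpos[of n] r by (simp add: ln_div ln_mult)
    ultimately have W: "lambertW0 (x n) \<ge> ln (1 / \<gamma> n) / 4" using L by linarith
    have num: "a n + \<gamma> n \<le> 3 * a n" using ahalf[of n] g4 by linarith
    have "\<sigma> n \<le> (3 * a n) / (ln (1 / \<gamma> n) / 4)" unfolding sd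
      using num W apos[of n] Lpos
      by (intro frac_le) auto
    moreover have "\<sigma> n > 0" unfolding sd using apos[of n] Wpos[of n] by simp
    moreover have "a n > 0" using ahalf[of n] by simp
    ultimately show ?case using Lpos by (simp add: abs_of_pos field_simps)
  qed
  then show "\<sigma> \<in> O(\<lambda>n. a n / ln (1 / \<gamma> n))" by (intro bigoI)
qed

end
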